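(* Let $n\ge 3$. The metric dimension of the power graph $P(G(n))$ of the gyrogroup $G(n)$ (defined in the context) is $\psi(P(G(n)))=2^n-3$.
   Context: Let $n\ge 3$ be an integer and $m=2^{n-1}$. Let $P(n)=\{0,1,\dots,m-1\}$, $H(n)=\{m,m+1,\dots,2^n-1\}$ and $G(n)=P(n)\cup H(n)$. For $i,j\in G(n)$ let $t,s,k\in P(n)$ be the residues modulo $m$ (taken in $\{0,\dots,m-1\}$) of $i+j$, $i+(\frac m2-1)j$ and $(\frac m2+1)i+(\frac m2-1)j$, respectively, and define $i\oplus j=t$ if $i,j\in P(n)$; $i\oplus j=t+m$ if $i\in P(n),j\in H(n)$; $i\oplus j=s+m$ if $i\in H(n),j\in P(n)$; $i\oplus j=k$ if $i,j\in H(n)$. Then $(G(n),\oplus)$ is a gyrogroup with identity $e=0$. Powers are defined by $a^1=a$, $a^{k+1}=a^k\oplus a$. The power graph $P(G(n))$ is the simple undirected graph with vertex set $G(n)$ in which distinct vertices $u,v$ are adjacent if and only if $u^k=v$ or $v^k=u$ for some positive integer $k$. For a connected graph $G$ and an ordered set $U=\{u_1,\dots,u_s\}\subseteq V(G)$, the representation of $v$ is $r(v|U)=(d(v,u_1),\dots,d(v,u_s))$; $U$ is a resolving set if distinct vertices have distinct representations. The metric dimension $\psi(G)$ is the minimum cardinality of a resolving set. *)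

theory Defs
  imports Main
begin

definition gm :: "nat \<Rightarrow> nat" where "gm n = 2 ^ (n - 1)"

definition carrierG :: "nat \<Rightarrow> nat set" where "carrierG n = {0..<2 ^ n}"

definition gyro_op :: "nat \<Rightarrow> nat \<Rightarrow> nat \<Rightarrow> nat" where
  "gyro_op n i j =
    (let m = gm n;
         t = (i + j) mod m;
         s = (i + (m div 2 - 1) * j) mod m;
         k = ((m div 2 + 1) * i + (m div 2 - 1) * j) mod m
     in if i < m \<and> j < m then t
        else if i < m \<and> m \<le> j then t + m
        else if m \<le> i \<and> j < m then s + m
        else k)"

text \<open>Powers: a^1 = a, a^(k+1) = a^k (+) a. The value at exponent 0 is irrelevant (set to e = 0).\<close>
fun gpow :: "nat \<Rightarrow> nat \<Rightarrow> nat \<Rightarrow> nat" where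
  "gpow n a 0 = 0"
| "gpow n a (Suc 0) = a"
| "gpow n a (Suc (Suc k)) = gyro_op n (gpow n a (Suc k)) a"

definition power_adj :: "nat \<Rightarrow> nat \<Rightarrow> nat \<Rightarrow> bool" where
  "power_adj n u v \<longleftrightarrow> u \<in> carrierG n \<and> v \<in> carrierG n \<and> u \<noteq> v \<and>
     ((\<exists>k\<ge>1. gpow n u k = v) \<or> (\<exists>k\<ge>1. gpow n v k = u))"

fun walk_of_len :: "'a set \<Rightarrow> ('a \<Rightarrow> 'a \<Rightarrow> bool) \<Rightarrow> nat \<Rightarrow> 'a \<Rightarrow> 'a \<Rightarrow> bool" where
  "walk_of_len V E 0 u v \<longleftrightarrow> u = v \<and> u \<in> V"
| "walk_of_len V E (Suc l) u v \<longleftrightarrow> u \<in> V \<and> (\<exists>w\<in>V. E u w \<and> walk_of_len V E l w v)"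

definition gdist :: "'a set \<Rightarrow> ('a \<Rightarrow> 'a \<Rightarrow> bool) \<Rightarrow> 'a \<Rightarrow> 'a \<Rightarrow> nat" where
  "gdist V E u v = (LEAST l. walk_of_len V E l u v)"

definition resolving_set :: "'a set \<Rightarrow> ('a \<Rightarrow> 'a \<Rightarrow> bool) \<Rightarrow> 'a set \<Rightarrow> bool" where
  "resolving_set V E U \<longleftrightarrow> U \<subseteq> V \<and>
     (\<forall>u\<in>V. \<forall>v\<in>V. u \<noteq> v \<longrightarrow> (\<exists>w\<in>U. gdist V E u w \<noteq> gdist V E v w))"

definition metric_dim :: "'a set \<Rightarrow> ('a \<Rightarrow> 'a \<Rightarrow> bool) \<Rightarrow> nat" where
  "metric_dim V E = (LEAST c. \<exists>U. resolving_set V E U \<and> card U = c)"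

end

theory Submission
  imports Defs "HOL-Computational_Algebra.Primes"
begin

lemma gpow_Suc: "gpow n a (Suc k) = (if k = 0 then a else gyro_op n (gpow n a k) a)"
  by (cases k) auto

lemma gm_facts: assumes "n \<ge> 3" shows "gm n \<ge> 4" "even (gm n)" "2 ^ n = 2 * gm n"
proof -
  obtain k where k: "n - 1 = Suc (Suc k)" proof
    show "n - 1 = Suc (Suc (n - 3))" using assms by simp
  qed
  have "(4::nat) = 2^2" by simp
  also have "\<dots> \<le> 2 ^ (n-1)" using assms by (intro power_increasing) auto
  finally show "gm n \<ge> 4" unfolding gm_def .
  show "even (gm n)" unfolding gm_def k by simp
  show "2 ^ n = 2 * gm n" unfolding gm_def using assms
    by (metis Suc_diff_1 not_numeral_le_zero neq0_conv power_Suc)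
qed

lemma gpow_P:
  assumes "n \<ge> 3" "a < gm n"
  shows "gpow n a k = (k * a) mod gm n"
proof (induction k)
  case 0 then show ?case by simp
next
  case (Suc k)
  have m: "gm n > 0" using gm_facts(1)[OF assms(1)] by simp
  show ?case
  proof (cases "k = 0")
    case True then show ?thesis using assms by simp
  next
    case False
    have "gpow n a (Suc k) = gyro_op n ((k*a) mod gm n) a" using False Suc by (simp add: gpow_Suc)
    also have "\<dots> = ((k*a) mod gm n + a) mod gm n" using m assms by (simp add: gyro_op_def Let_def)
    also have "\<dots> = (Suc k * a) mod gm n" by (simp add: mod_add_right_eq mod_add_left_eq add.commute)
    finally show ?thesis .
  qed
qed

lemma gpow_H:
  assumes "n \<ge> 3" "gm n \<le> a" "a < 2 * gm n"
  shows "gpow n a k = (if odd k then a else 0)"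
proof (induction k)
  case 0 then show ?case by simp
next
  case (Suc k)
  note f = gm_facts[OF assms(1)]
  show ?case
  proof (cases "k = 0")
    case True then show ?thesis by simp
  next
    case False
    show ?thesis
    proof (cases "odd k")
      case True
      have e: "(gm n div 2 + 1) * a + (gm n div 2 - 1) * a = gm n * a"
      proof -
        have "gm n div 2 + 1 + (gm n div 2 - 1) = gm n" using f by (elim evenE) auto
        then show ?thesis by (metis add_mult_distrib)
      qed
      have "gpow n a (Suc k) = gyro_op n a a" using False Suc True by (simp add: gpow_Suc)
      also have "\<dots> = 0" using assms e by (simp add: gyro_op_def Let_def)
      finally show ?thesis using True by simp
    next
      case ev: False
      have "gpow n a (Suc k) = gyro_op n 0 a" using False Suc ev by (simp add: gpow_Suc)
      also have "\<dots> = a mod gm n + gm n" using assms f by (simp add: gyro_op_def Let_def)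
      also have "\<dots> = a" using assms by (simp add: le_mod_geq)
      finally show ?thesis using ev by simp
    qed
  qed
qed


lemma reach:
  fixes u v m :: nat
  assumes "0 < u" "0 < m" "gcd u m dvd v"
  shows "\<exists>k\<ge>1. (k * u) mod m = v mod m"
proof -
  obtain x y where xy: "u * x = m * y + gcd u m" using bezout_nat[of u m] assms by auto
  obtain c where c: "v = gcd u m * c" using assms by (auto elim: dvdE)
  have "u * (x * c) = m * (y * c) + v" using xy c by (metis add_mult_distrib mult.assoc)
  then have "(u * (x * c)) mod m = v mod m" by (metis mod_mult_self3 mult.commute)
  then have "((x * c + m) * u) mod m = v mod m" by (simp add: algebra_simps)
  moreover have "x * c + m \<ge> 1" using assms by simp
  ultimately show ?thesis by blast
qed

lemma cyc:
  fixes u v r :: nat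
  assumes "0 < u" "0 < v" "m = 2 ^ r"
  shows "(\<exists>k\<ge>1. (k * u) mod m = v mod m) \<or> (\<exists>k\<ge>1. (k * v) mod m = u mod m)"
proof -
  have m: "m > 0" using assms by simp
  have "gcd u m dvd 2 ^ r" "gcd v m dvd 2 ^ r" using assms by auto
  then obtain i j where i: "gcd u m = 2 ^ i" and j: "gcd v m = 2 ^ j"
    using divides_primepow_nat[of 2] by (meson two_is_prime_nat)
  show ?thesis
  proof (cases "i \<le> j")
    case True
    then have "gcd u m dvd gcd v m" using i j by (simp add: le_imp_power_dvd)
    then have "gcd u m dvd v" using dvd_trans gcd_dvd1 by blast
    then show ?thesis using reach[of u m v] assms m by blast
  next
    case False
    then have "gcd v m dvd gcd u m" using i j by (simp add: le_imp_power_dvd)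
    then have "gcd v m dvd u" using dvd_trans gcd_dvd1 by blast
    then show ?thesis using reach[of v m u] assms m by blast
  qed
qed

lemma adj_iff:
  assumes n: "n \<ge> 3" and u: "u < 2 * gm n" and v: "v < 2 * gm n"
  shows "power_adj n u v \<longleftrightarrow> u \<noteq> v \<and> (u = 0 \<or> v = 0 \<or> (u < gm n \<and> v < gm n))"
proof -
  note f = gm_facts[OF n]
  have cu: "u \<in> carrierG n" "v \<in> carrierG n" using u v f by (auto simp: carrierG_def)
  have to0: "\<exists>k\<ge>1. gpow n a k = 0" if "a < 2 * gm n" for a
  proof (cases "a < gm n")
    case True
    then have "gpow n a (gm n) = 0" using gpow_P[OF n True] by simp
    then show ?thesis using f by (intro exI[of _ "gm n"]) auto
  next
    case False
    then have "gpow n a 2 = 0" using gpow_H[OF n _ that] by simp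
    then show ?thesis by (intro exI[of _ 2]) auto
  qed
  show ?thesis
  proof
    assume a: "power_adj n u v"
    then have ne: "u \<noteq> v" by (simp add: power_adj_def)
    show "u \<noteq> v \<and> (u = 0 \<or> v = 0 \<or> (u < gm n \<and> v < gm n))"
    proof (rule ccontr)
      assume "\<not> ?thesis"
      then have nz: "u \<noteq> 0" "v \<noteq> 0" and h: "gm n \<le> u \<or> gm n \<le> v" using ne by auto
      have no: False if hyp: "\<exists>k\<ge>1. gpow n a k = b" "a < 2 * gm n" "b < 2 * gm n" "a \<noteq> b" "a \<noteq> 0" "b \<noteq> 0"
          "gm n \<le> a \<or> gm n \<le> b" for a b
      proof -
        obtain k where k: "gpow n a k = b" using hyp(1) by blast
        show False
        proof (cases "a < gm n")
          case True
          then have "b < gm n" using k gpow_P[OF n True] f by auto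
          then show False using hyp True by auto
        next
          case False
          then show False using k gpow_H[OF n _ hyp(2)] hyp by (auto split: if_splits)
        qed
      qed
      show False using a unfolding power_adj_def using no[of u v] no[of v u] nz ne h u v by metis
    qed
  next
    assume a: "u \<noteq> v \<and> (u = 0 \<or> v = 0 \<or> (u < gm n \<and> v < gm n))"
    then consider "u = 0" | "v = 0" | "u \<noteq> 0" "v \<noteq> 0" "u < gm n" "v < gm n" by blast
    then show "power_adj n u v"
    proof cases
      case 1 then show ?thesis using to0[OF v] a cu unfolding power_adj_def by auto
    next
      case 2 then show ?thesis using to0[OF u] a cu unfolding power_adj_def by auto
    next
      case 3
      have "(\<exists>k\<ge>1. (k * u) mod gm n = v mod gm n) \<or> (\<exists>k\<ge>1. (k * v) mod gm n = u mod gm n)"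
        using cyc[of u v "gm n" "n - 1"] 3 by (simp add: gm_def)
      then show ?thesis using 3 a cu gpow_P[OF n 3(3)] gpow_P[OF n 3(4)] unfolding power_adj_def by auto
    qed
  qed
qed


lemma gdist_0: "u \<in> V \<Longrightarrow> gdist V E u u = 0"
  unfolding gdist_def by (rule Least_eq_0) simp

lemma gdist_1: "u \<in> V \<Longrightarrow> v \<in> V \<Longrightarrow> u \<noteq> v \<Longrightarrow> E u v \<Longrightarrow> gdist V E u v = 1"
  unfolding gdist_def
proof (rule Least_equality)
  show "walk_of_len V E 1 u v" if "u \<in> V" "v \<in> V" "u \<noteq> v" "E u v" using that by auto
  show "1 \<le> l" if "u \<noteq> v" "walk_of_len V E l u v" for l using that by (cases l) auto
qed

lemma gdist_2: "u \<in> V \<Longrightarrow> v \<in> V \<Longrightarrow> u \<noteq> v \<Longrightarrow> \<not> E u v \<Longrightarrow> w \<in> V \<Longrightarrow> E u w \<Longrightarrow> E w v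
  \<Longrightarrow> gdist V E u v = 2"
  unfolding gdist_def
proof (rule Least_equality)
  show "walk_of_len V E 2 u v" if "u \<in> V" "v \<in> V" "w \<in> V" "E u w" "E w v"
    using that by (auto simp: numeral_2_eq_2)
  show "2 \<le> l" if "u \<noteq> v" "\<not> E u v" "walk_of_len V E l u v" for l
    using that by (cases l; cases "l - 1") auto
qed

definition D :: "nat \<Rightarrow> nat \<Rightarrow> nat \<Rightarrow> nat" where
  "D n u v = (if u = v then 0 else if u = 0 \<or> v = 0 \<or> (u < gm n \<and> v < gm n) then 1 else 2)"

lemma gdist_D:
  assumes n: "n \<ge> 3" and u: "u < 2 * gm n" and v: "v < 2 * gm n"
  shows "gdist (carrierG n) (power_adj n) u v = D n u v"
proof -
  note f = gm_facts[OF n]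
  have V: "carrierG n = {0..<2 * gm n}" using f by (simp add: carrierG_def)
  show ?thesis
  proof (cases "u = v")
    case True then show ?thesis using u V by (simp add: gdist_0 D_def)
  next
    case False
    show ?thesis
    proof (cases "u = 0 \<or> v = 0 \<or> (u < gm n \<and> v < gm n)")
      case True
      then show ?thesis using False u v V adj_iff[OF n u v] by (simp add: gdist_1 D_def)
    next
      case nt: False
      have "gdist (carrierG n) (power_adj n) u v = 2"
        apply (rule gdist_2[where w = 0])
        using False nt u v V adj_iff[OF n u v] adj_iff[OF n u, of 0] adj_iff[OF n _ v, of 0] f by auto
      then show ?thesis using False nt by (simp add: D_def)
    qed
  qed
qed

theorem mainTheorem6:
  fixes n :: nat
  assumes "n \<ge> 3"
  shows "metric_dim (carrierG n) (power_adj n) = 2 ^ n - 3"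
proof -
  note n = assms
  note f = gm_facts[OF n]
  define m where "m = gm n"
  have m4: "m \<ge> 4" and N: "2 ^ n = 2 * m" using f m_def by auto
  have V: "carrierG n = {0..<2 * m}" using N by (simp add: carrierG_def)
  have gd: "gdist (carrierG n) (power_adj n) u v = D n u v" if "u < 2 * m" "v < 2 * m" for u v
    using gdist_D[OF n] that m_def by simp
  define U0 where "U0 = {2..<m} \<union> {m+1..<2*m}"
  have cU0: "card U0 = 2 ^ n - 3"
  proof -
    have "card U0 = card {2..<m} + card {m+1..<2*m}" unfolding U0_def
      by (rule card_Un_disjoint) auto
    then show ?thesis using N m4 by simp
  qed
  have res: "resolving_set (carrierG n) (power_adj n) U0"
    unfolding resolving_set_def
  proof (intro conjI ballI impI)
    show "U0 \<subseteq> carrierG n" unfolding V U0_def by auto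
    fix u v assume uv: "u \<in> carrierG n" "v \<in> carrierG n" "u \<noteq> v"
    then have ub: "u < 2 * m" "v < 2 * m" using V by auto
    have U0b: "w \<in> U0 \<Longrightarrow> w < 2 * m" for w unfolding U0_def by auto
    have "\<exists>w\<in>U0. D n u w \<noteq> D n v w"
    proof (cases "u \<in> U0 \<or> v \<in> U0")
      case True
      then show ?thesis
      proof
        assume "u \<in> U0" then show ?thesis using uv by (intro bexI[of _ u]) (auto simp: D_def)
      next
        assume "v \<in> U0" then show ?thesis using uv by (intro bexI[of _ v]) (auto simp: D_def)
      qed
    next
      case False
      then have "u \<in> {0, 1, m}" "v \<in> {0, 1, m}" using ub unfolding U0_def by auto
      moreover have "2 \<in> U0" "m + 1 \<in> U0" using m4 unfolding U0_def by auto
      moreover have "D n u 2 \<noteq> D n v 2 \<or> D n u (m+1) \<noteq> D n v (m+1)"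
        using calculation uv m4 m_def
        apply (simp only: insert_iff empty_iff)
        apply (elim disjE)
        by (auto simp: D_def)
      ultimately show ?thesis by blast
    qed
    then show "\<exists>w\<in>U0. gdist (carrierG n) (power_adj n) u w \<noteq> gdist (carrierG n) (power_adj n) v w"
      using gd ub U0b by auto
  qed
  have lower: "2 ^ n - 3 \<le> card U" if r: "resolving_set (carrierG n) (power_adj n) U" for U
  proof -
    have sub: "U \<subseteq> {0..<2*m}" using r V by (simp add: resolving_set_def)
    have fin: "finite U" using sub finite_subset by blast
    have sep: "\<exists>w\<in>U. D n u w \<noteq> D n v w" if hh: "u < 2*m" "v < 2*m" "u \<noteq> v" for u v
    proof -
      have "\<exists>w\<in>U. gdist (carrierG n) (power_adj n) u w \<noteq> gdist (carrierG n) (power_adj n) v w"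
        using r hh unfolding resolving_set_def V by simp
      then obtain w where w: "w \<in> U" "gdist (carrierG n) (power_adj n) u w \<noteq> gdist (carrierG n) (power_adj n) v w"
        by blast
      have "w < 2 * m" using w(1) sub by auto
      then show ?thesis using w gd[of u w] gd[of v w] hh by metis
    qed
    define A where "A = {1..<m}"
    define B where "B = {m..<2*m}"
    have cA: "card (A - U) \<le> Suc 0"
    proof (subst card_le_Suc0_iff_eq, simp add: A_def, intro ballI, rule ccontr)
      fix p q assume pq: "p \<in> A - U" "q \<in> A - U" "p \<noteq> q"
      then obtain w where "w \<in> U" "D n p w \<noteq> D n q w" using sep[of p q] A_def by auto
      then show False using pq A_def m_def by (auto simp: D_def split: if_splits)
    qed
    have cB: "card (B - U) \<le> Suc 0"
    proof (subst card_le_Suc0_iff_eq, simp add: B_def, intro ballI, rule ccontr)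
      fix p q assume pq: "p \<in> B - U" "q \<in> B - U" "p \<noteq> q"
      then obtain w where "w \<in> U" "D n p w \<noteq> D n q w" using sep[of p q] B_def by auto
      then show False using pq B_def m_def by (auto simp: D_def split: if_splits)
    qed
    have eA: "card A = card (A \<inter> U) + card (A - U)"
    proof -
      have "A = (A \<inter> U) \<union> (A - U)" by blast
      then have "card A = card ((A \<inter> U) \<union> (A - U))" by simp
      also have "\<dots> = card (A \<inter> U) + card (A - U)" using A_def by (intro card_Un_disjoint) auto
      finally show ?thesis .
    qed 
    have eB: "card B = card (B \<inter> U) + card (B - U)"
    proof -
      have "B = (B \<inter> U) \<union> (B - U)" by blast
      then have "card B = card ((B \<inter> U) \<union> (B - U))" by simp
      also have "\<dots> = card (B \<inter> U) + card (B - U)" using B_def by (intro card_Un_disjoint) auto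
      finally show ?thesis .
    qed
    have "card (A \<inter> U) + card (B \<inter> U) = card ((A \<inter> U) \<union> (B \<inter> U))"
      using fin A_def B_def by (intro card_Un_disjoint[symmetric]) auto
    also have "\<dots> \<le> card U" using fin by (intro card_mono) auto
    finally have "card (A \<inter> U) + card (B \<inter> U) \<le> card U" .
    moreover have "card A = m - 1" "card B = m" using A_def B_def by auto
    ultimately show ?thesis using eA eB cA cB N m4 by linarith
  qed
  show ?thesis unfolding metric_dim_def
  proof (rule Least_equality)
    show "\<exists>U. resolving_set (carrierG n) (power_adj n) U \<and> card U = 2 ^ n - 3"
      using res cU0 by blast
    show "2 ^ n - 3 \<le> c" if "\<exists>U. resolving_set (carrierG n) (power_adj n) U \<and> card U = c" for c
      using that lower by blast
  qed
qed

end
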